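(* Let $n,k$ be positive integers, let $\mathbf{U} = (u_{ij}) \in \{0, 1\}^{n \times k}$ be a binary clustering matrix with $\sum_{j=1}^k u_{ij} = 1$ for every $i$, such that $\mathbf{U}^T\mathbf{U}$ is invertible, let $\sigma$ be an element-wise nonlinear function, and define $\mathbf{C} = \mathbf{U} (\mathbf{U}^T \mathbf{U})^{-1} \mathbf{U}^T \in \mathbb{R}^{n\times n}$. Then for every $\mathbf{x} \in \mathbb{R}^{n}$, \[ \sigma(\mathbf{C} \mathbf{x}) = \mathbf{C}^T \sigma( \mathbf{C} \mathbf{x}). \]
   Context: Here $\sigma:\mathbb{R}\to\mathbb{R}$ is applied coordinate-wise to vectors. The condition $\sum_j u_{ij}=1$ means every row of $\mathbf{U}$ contains exactly one entry equal to $1$; invertibility of $\mathbf{U}^T\mathbf{U}$ (a diagonal matrix of cluster sizes) means every cluster is nonempty. *)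

theory Defs
  imports "HOL-Analysis.Analysis"
begin

definition map_vec :: "(real \<Rightarrow> real) \<Rightarrow> real ^ 'n \<Rightarrow> real ^ 'n" where
  "map_vec \<sigma> v = (\<chi> i. \<sigma> (v $ i))"

end

theory Submission
  imports Defs
begin

lemma map_vec_U:
  fixes U :: "real ^ 'k ^ 'n" and w :: "real ^ 'k"
  assumes binary: "\<forall>i j. U $ i $ j = 0 \<or> U $ i $ j = 1"
    and rowsum: "\<forall>i. (\<Sum>j\<in>UNIV. U $ i $ j) = 1"
  shows "map_vec \<sigma> (U *v w) = U *v map_vec \<sigma> w"
proof -
  have row: "\<exists>j0. U $ i $ j0 = 1 \<and> (\<forall>j. j \<noteq> j0 \<longrightarrow> U $ i $ j = 0)" for i
  proof -
    have "(\<Sum>j\<in>UNIV. U $ i $ j) = (\<Sum>j\<in>UNIV. if U $ i $ j = 1 then 1 else 0)"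
      by (rule sum.cong) (use binary in auto)
    also have "\<dots> = real (card {j. U $ i $ j = 1})"
      by (simp add: sum.If_cases)
    finally have "card {j. U $ i $ j = 1} = 1" using rowsum by simp
    then obtain j0 where j0: "{j. U $ i $ j = 1} = {j0}" by (auto simp: card_Suc_eq)
    have "U $ i $ j0 = 1" using j0 by blast
    moreover have "U $ i $ j = 0" if "j \<noteq> j0" for j
    proof -
      have "j \<notin> {j. U $ i $ j = 1}" using j0 that by blast
      then show ?thesis using binary by auto
    qed
    ultimately show ?thesis by blast
  qed
  show ?thesis
  proof (subst vec_eq_iff, intro allI)
    fix i
    obtain j0 where j0: "U $ i $ j0 = 1" "\<forall>j. j \<noteq> j0 \<longrightarrow> U $ i $ j = 0" using row by blast
    have s1: "(\<Sum>j\<in>UNIV. U $ i $ j * f j) = f j0" for f :: "'k \<Rightarrow> real"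
    proof -
      have "(\<Sum>j\<in>UNIV. U $ i $ j * f j) = (\<Sum>j\<in>UNIV. if j = j0 then f j0 else 0)"
        by (rule sum.cong) (use j0 in auto)
      then show ?thesis by simp
    qed
    show "map_vec \<sigma> (U *v w) $ i = (U *v map_vec \<sigma> w) $ i"
      by (simp add: map_vec_def matrix_vector_mult_def s1[of "\<lambda>j. w $ j"] s1[of "\<lambda>j. \<sigma> (w $ j)"])
  qed
qed

theorem lemma2:
  fixes U :: "real ^ 'k ^ 'n" and \<sigma> :: "real \<Rightarrow> real" and x :: "real ^ 'n"
  assumes binary: "\<forall>i j. U $ i $ j = 0 \<or> U $ i $ j = 1"
    and rowsum: "\<forall>i. (\<Sum>j\<in>UNIV. U $ i $ j) = 1"
    and inv: "invertible (transpose U ** U)"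
  shows "map_vec \<sigma> ((U ** matrix_inv (transpose U ** U) ** transpose U) *v x)
       = transpose (U ** matrix_inv (transpose U ** U) ** transpose U)
           *v map_vec \<sigma> ((U ** matrix_inv (transpose U ** U) ** transpose U) *v x)"
proof -
  define A where "A = transpose U ** U"
  define M where "M = matrix_inv A"
  have AM: "A ** M = mat 1"
    using inv unfolding M_def A_def matrix_inv_def invertible_def by (rule someI_ex[THEN conjunct1])
  have At: "transpose A = A" unfolding A_def by (simp add: matrix_transpose_mul)
  have MtA: "transpose M ** A = mat 1"
    by (metis AM At matrix_transpose_mul transpose_mat)
  define w where "w = (M ** transpose U) *v x"
  have y: "(U ** M ** transpose U) *v x = U *v w"
    unfolding w_def by (simp add: matrix_vector_mul_assoc matrix_mul_assoc)
  have CtU: "transpose (U ** M ** transpose U) ** U = U"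
  proof -
    have "transpose (U ** M ** transpose U) ** U = U ** transpose M ** A"
      by (simp add: matrix_transpose_mul matrix_mul_assoc A_def)
    also have "\<dots> = U" by (metis MtA matrix_mul_assoc matrix_mul_rid)
    finally show ?thesis .
  qed
  have e1: "map_vec \<sigma> ((U ** M ** transpose U) *v x) = U *v map_vec \<sigma> w"
    using y map_vec_U[OF binary rowsum] by simp
  have e2: "transpose (U ** M ** transpose U) *v (U *v map_vec \<sigma> w) = U *v map_vec \<sigma> w"
    by (simp add: matrix_vector_mul_assoc CtU)
  have "map_vec \<sigma> ((U ** M ** transpose U) *v x)
       = transpose (U ** M ** transpose U) *v map_vec \<sigma> ((U ** M ** transpose U) *v x)"
    by (simp only: e1 e2)
  from this[unfolded M_def A_def] show ?thesis .
qed

end
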